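(* Let $m,k$ be positive integers and let $\mu_1,\dots,\mu_k\in\{0,1\}^m$ be random vectors whose entries are independent fair coin flips. Let $\beta=m/(k2^k)$. Then, with probability at least $1-2^{(1-\beta)k}$, the following non-degeneracy condition holds: whenever $\tau\in\{0,1\}^m$ has the property that for all $x,y,z\in\{1,\dots,m\}$ there exists some $i$ with $\tau(x)=\mu_i(x)$, $\tau(y)=\mu_i(y)$ and $\tau(z)=\mu_i(z)$, then $\tau=\mu_j$ for some $j\in\{1,\dots,k\}$. *)

theory Defs
  imports "HOL-Probability.Probability"
begin

text \<open>Binary vectors in {0,1}^m are modelled as extensional functions
  {1..m} \<rightarrow> bool (True = 1). Independent fair coin flips for all entries
  means the uniform distribution on the (finite) set of all such tuples.\<close>

definition bin_vectors :: "nat \<Rightarrow> (nat \<Rightarrow> bool) set" where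
  "bin_vectors m = {1..m} \<rightarrow>\<^sub>E (UNIV :: bool set)"

definition vector_tuples :: "nat \<Rightarrow> nat \<Rightarrow> (nat \<Rightarrow> nat \<Rightarrow> bool) set" where
  "vector_tuples m k = {1..k} \<rightarrow>\<^sub>E bin_vectors m"

definition nondegenerate :: "nat \<Rightarrow> nat \<Rightarrow> (nat \<Rightarrow> nat \<Rightarrow> bool) \<Rightarrow> bool" where
  "nondegenerate m k \<mu> \<longleftrightarrow>
     (\<forall>\<tau> \<in> bin_vectors m.
        (\<forall>x\<in>{1..m}. \<forall>y\<in>{1..m}. \<forall>z\<in>{1..m}.
           \<exists>i\<in>{1..k}. \<tau> x = \<mu> i x \<and> \<tau> y = \<mu> i y \<and> \<tau> z = \<mu> i z)
        \<longrightarrow> (\<exists>j\<in>{1..k}. \<tau> = \<mu> j))"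

end

theory Submission
  imports Defs
begin

lemma good_nondeg:
  assumes mu: "\<mu> \<in> vector_tuples m k" and m: "m \<ge> 1"
    and G: "\<forall>A\<subseteq>{1..k}. \<exists>x\<in>{1..m}. \<forall>i\<in>{1..k}. \<mu> i x = (i \<in> A)"
  shows "nondegenerate m k \<mu>"
  unfolding nondegenerate_def
proof (intro ballI impI)
  fix \<tau> assume tau: "\<tau> \<in> bin_vectors m"
  assume tri: "\<forall>x\<in>{1..m}. \<forall>y\<in>{1..m}. \<forall>z\<in>{1..m}.
           \<exists>i\<in>{1..k}. \<tau> x = \<mu> i x \<and> \<tau> y = \<mu> i y \<and> \<tau> z = \<mu> i z"
  define S where "S x = {i\<in>{1..k}. \<tau> x = \<mu> i x}" for x
  have a: "S x \<inter> S y \<inter> S z \<noteq> {}" if "x\<in>{1..m}" "y\<in>{1..m}" "z\<in>{1..m}" for x y z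
  proof -
    have "\<exists>i\<in>{1..k}. \<tau> x = \<mu> i x \<and> \<tau> y = \<mu> i y \<and> \<tau> z = \<mu> i z"
      using tri that by simp
    then obtain i where "i\<in>{1..k}" "\<tau> x = \<mu> i x" "\<tau> y = \<mu> i y" "\<tau> z = \<mu> i z" by blast
    then have "i \<in> S x \<inter> S y \<inter> S z" unfolding S_def by simp
    then show ?thesis by blast
  qed
  have b: "\<exists>x\<in>{1..m}. S x = A \<or> S x = {1..k} - A" if A: "A \<subseteq> {1..k}" for A
  proof -
    obtain x where x: "x\<in>{1..m}" "\<forall>i\<in>{1..k}. \<mu> i x = (i \<in> A)" using G[rule_format, OF A] by blast
    show ?thesis
    proof (cases "\<tau> x")
      case True
      then have "S x = A" using x A unfolding S_def by auto
      then show ?thesis using x by blast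
    next
      case False
      then have "S x = {1..k} - A" using x A unfolding S_def by auto
      then show ?thesis using x by blast
    qed
  qed
  have fin: "finite (S x)" for x unfolding S_def by auto
  have sub: "S x \<subseteq> {1..k}" for x unfolding S_def by auto
  obtain x0 where x0: "x0 \<in> {1..m}" "\<forall>y. y \<in> {1..m} \<longrightarrow> card (S x0) \<le> card (S y)"
    using ex_has_least_nat[of "\<lambda>x. x \<in> {1..m}" 1 "\<lambda>x. card (S x)"] m by auto
  obtain j where j: "j \<in> S x0" using a[OF x0(1) x0(1) x0(1)] by blast
  have single: "S x0 = {j}"
  proof (rule ccontr)
    assume "S x0 \<noteq> {j}"
    then obtain i' where i': "i' \<in> S x0" "i' \<noteq> j" using j by blast
    define B where "B = S x0 - {j}"
    have cB: "card B < card (S x0)" unfolding B_def using j fin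
      by (meson card_Diff1_less)
    have "card (S x0) \<ge> 2"
    proof -
      have "{i', j} \<subseteq> S x0" using i' j by auto
      from card_mono[OF fin this] show ?thesis using i' by auto
    qed
    obtain y where y: "y\<in>{1..m}" "S y = B \<or> S y = {1..k} - B"
      using b[of B] sub unfolding B_def by blast
    have yB: "S y = {1..k} - B"
    proof -
      have "S y \<noteq> B" using x0(2) y(1) cB by (metis not_le)
      then show ?thesis using y(2) by blast
    qed
    obtain z where z: "z\<in>{1..m}" "S z = {j} \<or> S z = {1..k} - {j}"
      using b[of "{j}"] sub j by blast
    have zB: "S z = {1..k} - {j}"
    proof -
      have "S z \<noteq> {j}"
      proof
        assume "S z = {j}"
        then have "card (S z) = 1" by simp
        moreover have "card (S x0) \<le> card (S z)" using x0(2) z(1) by blast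
        ultimately show False using \<open>card (S x0) \<ge> 2\<close> by linarith
      qed
      then show ?thesis using z(2) by blast
    qed
    have "S x0 \<inter> S y \<inter> S z = {}" using yB zB unfolding B_def by auto
    then show False using a[OF x0(1) y(1) z(1)] by blast
  qed
  have jk: "j \<in> {1..k}" using j sub by blast
  have all: "\<tau> y = \<mu> j y" if "y \<in> {1..m}" for y
  proof -
    have "j \<in> S y" using a[OF x0(1) that that] unfolding single by auto
    then show ?thesis unfolding S_def by auto
  qed
  have muj: "\<mu> j \<in> bin_vectors m" using mu jk unfolding vector_tuples_def by auto
  have "\<tau> = \<mu> j"
  proof
    fix y show "\<tau> y = \<mu> j y"
    proof (cases "y \<in> {1..m}")
      case True then show ?thesis using all by blast
    next
      case False then show ?thesis using tau muj unfolding bin_vectors_def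
        by (metis PiE_arb)
    qed
  qed
  then show "\<exists>j\<in>{1..k}. \<tau> = \<mu> j" using jk by blast
qed

lemma card_bin: "card (bin_vectors m) = 2^m"
  unfolding bin_vectors_def by (simp add: card_PiE)

lemma card_T: "card (vector_tuples m k) = 2^(m*k)"
  unfolding vector_tuples_def by (simp add: card_PiE card_bin power_mult)

lemma fin_T: "finite (vector_tuples m k)"
  unfolding vector_tuples_def bin_vectors_def by (auto intro!: finite_PiE)

lemma card_bad:
  assumes A: "A \<subseteq> {1..k}"
  shows "card {\<mu>\<in>vector_tuples m k. \<forall>x\<in>{1..m}. \<exists>i\<in>{1..k}. \<mu> i x \<noteq> (i\<in>A)} = (2^k - 1)^m"
proof -
  define P where "P = {1..k} \<rightarrow>\<^sub>E (UNIV::bool set)"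
  define pat where "pat = restrict (\<lambda>i. i\<in>A) {1..k}"
  define tr where "tr \<mu> = restrict (\<lambda>x. restrict (\<lambda>i. \<mu> i x) {1..k}) {1..m}" for \<mu> :: "nat \<Rightarrow> nat \<Rightarrow> bool"
  define tr' where "tr' \<nu> = restrict (\<lambda>i. restrict (\<lambda>x. \<nu> x i) {1..m}) {1..k}" for \<nu> :: "nat \<Rightarrow> nat \<Rightarrow> bool"
  define Bad where "Bad = {\<mu>\<in>vector_tuples m k. \<forall>x\<in>{1..m}. \<exists>i\<in>{1..k}. \<mu> i x \<noteq> (i\<in>A)}"
  have patP: "pat \<in> P" unfolding pat_def P_def by auto
  have cP: "card P = 2^k" unfolding P_def by (simp add: card_PiE)
  have eqv: "(\<exists>i\<in>{1..k}. \<mu> i x \<noteq> (i\<in>A)) \<longleftrightarrow> restrict (\<lambda>i. \<mu> i x) {1..k} \<noteq> pat" for \<mu> :: "nat \<Rightarrow> nat \<Rightarrow> bool" and x :: nat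
  proof
    assume "\<exists>i\<in>{1..k}. \<mu> i x \<noteq> (i\<in>A)"
    then obtain i where "i \<in> {1..k}" "\<mu> i x \<noteq> (i\<in>A)" by blast
    then have "restrict (\<lambda>i. \<mu> i x) {1..k} i \<noteq> pat i" unfolding pat_def by simp
    then show "restrict (\<lambda>i. \<mu> i x) {1..k} \<noteq> pat" by metis
  next
    assume "restrict (\<lambda>i. \<mu> i x) {1..k} \<noteq> pat"
    then obtain i where "restrict (\<lambda>i. \<mu> i x) {1..k} i \<noteq> pat i" by blast
    then show "\<exists>i\<in>{1..k}. \<mu> i x \<noteq> (i\<in>A)" unfolding pat_def by (cases "i \<in> {1..k}") auto
  qed
  have "bij_betw tr Bad ({1..m} \<rightarrow>\<^sub>E (P - {pat}))"
  proof (rule bij_betw_byWitness[where f'=tr'])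
    show "\<forall>a\<in>Bad. tr' (tr a) = a"
    proof
      fix a assume "a \<in> Bad"
      then have a: "a \<in> {1..k} \<rightarrow>\<^sub>E bin_vectors m" unfolding Bad_def vector_tuples_def by auto
      show "tr' (tr a) = a"
      proof (rule ext)
        fix i show "tr' (tr a) i = a i"
        proof (cases "i \<in> {1..k}")
          case True
          then have ai: "a i \<in> bin_vectors m" using a by (rule PiE_mem[rotated])
          show ?thesis
          proof (rule ext)
            fix x show "tr' (tr a) i x = a i x"
            proof (cases "x \<in> {1..m}")
              case True2: True
              show ?thesis unfolding tr'_def tr_def using True True2 by simp
            next
              case False2: False
              have "a i x = undefined" using ai False2 unfolding bin_vectors_def by (rule PiE_arb)
              then show ?thesis unfolding tr'_def tr_def using True False2 by simp
            qed
          qed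
        next
          case False
          have "a i = undefined" using a False by (rule PiE_arb)
          moreover have "tr' (tr a) i = undefined" unfolding tr'_def by (subst restrict_def) (rule if_not_P[OF False])
          ultimately show ?thesis by simp
        qed
      qed
    qed
    show "\<forall>a'\<in>{1..m} \<rightarrow>\<^sub>E (P - {pat}). tr (tr' a') = a'"
    proof
      fix a assume a: "a \<in> {1..m} \<rightarrow>\<^sub>E (P - {pat})"
      show "tr (tr' a) = a"
      proof (rule ext)
        fix x show "tr (tr' a) x = a x"
        proof (cases "x \<in> {1..m}")
          case True
          then have ai: "a x \<in> P" using a by (metis PiE_mem DiffD1)
          show ?thesis
          proof (rule ext)
            fix i show "tr (tr' a) x i = a x i"
            proof (cases "i \<in> {1..k}")
              case True2: True
              show ?thesis unfolding tr'_def tr_def using True True2 by simp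
            next
              case False2: False
              have "a x i = undefined" using ai False2 unfolding P_def by (rule PiE_arb)
              then show ?thesis unfolding tr'_def tr_def using True False2 by simp
            qed
          qed
        next
          case False
          have "a x = undefined" using a False by (rule PiE_arb)
          moreover have "tr (tr' a) x = undefined" unfolding tr_def by (subst restrict_def) (rule if_not_P[OF False])
          ultimately show ?thesis by simp
        qed
      qed
    qed
    show "tr ` Bad \<subseteq> {1..m} \<rightarrow>\<^sub>E (P - {pat})"
    proof
      fix b assume "b \<in> tr ` Bad"
      then obtain a where a: "a \<in> Bad" "b = tr a" by blast
      show "b \<in> {1..m} \<rightarrow>\<^sub>E (P - {pat})"
        using a eqv unfolding Bad_def tr_def P_def by auto
    qed
    show "tr' ` ({1..m} \<rightarrow>\<^sub>E (P - {pat})) \<subseteq> Bad"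
    proof
      fix b assume "b \<in> tr' ` ({1..m} \<rightarrow>\<^sub>E (P - {pat}))"
      then obtain a where a: "a \<in> {1..m} \<rightarrow>\<^sub>E (P - {pat})" "b = tr' a" by blast
      have "b \<in> vector_tuples m k"
        unfolding a(2) vector_tuples_def bin_vectors_def tr'_def by (simp add: restrict_PiE_iff)
      moreover have "\<forall>x\<in>{1..m}. \<exists>i\<in>{1..k}. b i x \<noteq> (i\<in>A)"
      proof
        fix x assume x: "x \<in> {1..m}"
        have "a x \<in> P - {pat}" using a(1) x by (rule PiE_mem)
        then have "a x \<noteq> pat" "a x \<in> P" by auto
        have "restrict (\<lambda>i. b i x) {1..k} = a x"
        proof (rule ext)
          fix i show "restrict (\<lambda>i. b i x) {1..k} i = a x i"
          proof (cases "i \<in> {1..k}")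
            case True then show ?thesis using x by (simp add: a(2) tr'_def)
          next
            case False
            have "a x i = undefined" using \<open>a x \<in> P\<close> False unfolding P_def by (rule PiE_arb)
            moreover have "restrict (\<lambda>i. b i x) {1..k} i = undefined" by (subst restrict_def) (rule if_not_P[OF False])
            ultimately show ?thesis by simp
          qed
        qed
        then have "restrict (\<lambda>i. b i x) {1..k} \<noteq> pat" using \<open>a x \<noteq> pat\<close> by simp
        then show "\<exists>i\<in>{1..k}. b i x \<noteq> (i\<in>A)" using eqv by blast
      qed
      ultimately show "b \<in> Bad" unfolding Bad_def by blast
    qed
  qed
  then have "card Bad = card ({1..m} \<rightarrow>\<^sub>E (P - {pat}))" by (rule bij_betw_same_card)
  also have "\<dots> = (2^k - 1)^m" using patP cP by (simp add: card_PiE P_def)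
  finally show ?thesis unfolding Bad_def .
qed


lemma analytic:
  fixes m k :: nat
  assumes "k \<ge> 1"
  shows "2^k * ((2^k - 1) / 2^k :: real)^m \<le> 2 powr ((1 - real m / (real k * 2 ^ k)) * real k)"
proof -
  define t :: real where "t = 1 / 2^k"
  have t0: "t \<ge> 0" unfolding t_def by simp
  have q: "(2^k - 1) / 2^k = 1 - t" unfolding t_def by (simp add: field_simps)
  have "1 - t \<le> exp (-t)" using exp_ge_add_one_self[of "-t"] by simp
  moreover have "0 \<le> 1 - t" unfolding t_def by simp
  ultimately have "(1 - t)^m \<le> exp (-t)^m" by (rule power_mono)
  also have "\<dots> = exp (- (real m * t))" by (metis exp_of_nat_mult mult_minus_right)
  also have "\<dots> \<le> exp (- (real m * t) * ln 2)"
  proof -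
    have "real m * t * ln 2 \<le> real m * t * 1"
      using ln_2_less_1 t0 by (intro mult_left_mono) auto
    then show ?thesis by simp
  qed
  also have "\<dots> = 2 powr (- (real m * t))" by (simp add: powr_def)
  finally have h: "(1 - t)^m \<le> 2 powr (- (real m * t))" .
  have "2^k * ((2^k - 1) / 2^k :: real)^m = 2^k * (1-t)^m" by (simp add: q)
  also have "\<dots> \<le> 2^k * 2 powr (- (real m * t))" using h by simp
  also have "\<dots> = 2 powr (real k - real m * t)"
    by (simp add: powr_diff powr_minus powr_realpow divide_inverse)
  also have "real k - real m * t = (1 - real m / (real k * 2 ^ k)) * real k"
    unfolding t_def using assms by (simp add: field_simps)
  finally show ?thesis .
qed

theorem proposition1:
  fixes m k :: nat
  assumes "m \<ge> 1" and "k \<ge> 1"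
  defines "\<beta> \<equiv> real m / (real k * 2 ^ k)"
  shows "measure_pmf.prob (pmf_of_set (vector_tuples m k)) {\<mu>. nondegenerate m k \<mu>}
           \<ge> 1 - 2 powr ((1 - \<beta>) * real k)"
proof -
  define T where "T = vector_tuples m k"
  define Bad where "Bad A = {\<mu>\<in>vector_tuples m k. \<forall>x\<in>{1..m}. \<exists>i\<in>{1..k}. \<mu> i x \<noteq> (i\<in>A)}" for A
  define G where "G = {\<mu>\<in>T. \<forall>A\<subseteq>{1..k}. \<exists>x\<in>{1..m}. \<forall>i\<in>{1..k}. \<mu> i x = (i\<in>A)}"
  have finT: "finite T" unfolding T_def by (rule fin_T)
  have cT: "card T = 2^(m*k)" unfolding T_def by (rule card_T)
  have Tne: "T \<noteq> {}" using cT by auto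
  have GND: "G \<subseteq> T \<inter> {\<mu>. nondegenerate m k \<mu>}"
  proof
    fix \<mu> assume "\<mu> \<in> G"
    then have h: "\<mu> \<in> T" "\<forall>A\<subseteq>{1..k}. \<exists>x\<in>{1..m}. \<forall>i\<in>{1..k}. \<mu> i x = (i\<in>A)"
      unfolding G_def by auto
    have "nondegenerate m k \<mu>" using good_nondeg[OF h(1)[unfolded T_def] assms(1) h(2)] .
    then show "\<mu> \<in> T \<inter> {\<mu>. nondegenerate m k \<mu>}" using h(1) by simp
  qed
  have TG: "T - G \<subseteq> (\<Union>A\<in>Pow {1..k}. Bad A)"
  proof
    fix \<mu> assume "\<mu> \<in> T - G"
    then have h: "\<mu> \<in> T" "\<not> (\<forall>A\<subseteq>{1..k}. \<exists>x\<in>{1..m}. \<forall>i\<in>{1..k}. \<mu> i x = (i\<in>A))"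
      unfolding G_def by auto
    then obtain A where A: "A \<subseteq> {1..k}" "\<not> (\<exists>x\<in>{1..m}. \<forall>i\<in>{1..k}. \<mu> i x = (i\<in>A))"
      by blast
    then have "\<mu> \<in> Bad A" unfolding Bad_def using h(1) unfolding T_def by blast
    then show "\<mu> \<in> (\<Union>A\<in>Pow {1..k}. Bad A)" using A(1) by blast
  qed
  have "card (T - G) \<le> card (\<Union>A\<in>Pow {1..k}. Bad A)"
    by (rule card_mono[OF _ TG]) (auto simp: Bad_def fin_T)
  also have "\<dots> \<le> (\<Sum>A\<in>Pow {1..k}. card (Bad A))" by (rule card_UN_le) simp
  also have "\<dots> = (\<Sum>A\<in>Pow {1..k}. (2^k - 1)^m)"
  proof (rule sum.cong[OF refl])
    fix A assume "A \<in> Pow {1..k}"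
    then show "card (Bad A) = (2^k - 1)^m" unfolding Bad_def by (intro card_bad) auto
  qed
  also have "\<dots> = 2^k * (2^k - 1)^m" by (simp add: card_Pow)
  finally have cTG: "card (T - G) \<le> 2^k * (2^k - 1)^m" .
  have finG: "finite G" using finT unfolding G_def by simp
  have GT: "G \<subseteq> T" unfolding G_def by blast
  have "card T = card G + card (T - G)"
    using card_Diff_subset[OF finG GT] card_mono[OF finT GT] by simp
  then have "real (card T) - real (2^k * (2^k - 1)^m) \<le> real (card G)"
    using cTG by linarith
  also have "real (card G) \<le> real (card (T \<inter> {\<mu>. nondegenerate m k \<mu>}))"
    using card_mono[OF _ GND] finT by simp
  finally have main: "real (card T) - real (2^k * (2^k - 1)^m) \<le> real (card (T \<inter> {\<mu>. nondegenerate m k \<mu>}))" .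
  have k1: "(1::nat) \<le> 2^k" by simp
  have eq: "real (2^k * (2^k - 1)^m) / real (card T) = 2^k * ((2^k - 1) / 2^k :: real)^m"
  proof -
    have c1: "real (2^k * (2^k - 1)^m) = (2::real)^k * ((2::real)^k - 1)^m"
      using k1 by (simp add: of_nat_diff)
    have c2: "real (card T) = ((2::real)^k)^m"
      unfolding cT mult.commute[of m k] power_mult by simp
    show ?thesis unfolding c1 c2 power_divide by simp
  qed
  have "1 - 2 powr ((1 - \<beta>) * real k) \<le> 1 - real (2^k * (2^k - 1)^m) / real (card T)"
    using analytic[OF assms(2), of m] unfolding eq \<beta>_def by simp
  also have "\<dots> = (real (card T) - real (2^k * (2^k - 1)^m)) / real (card T)"
    using Tne finT by (simp add: field_simps)
  also have "\<dots> \<le> real (card (T \<inter> {\<mu>. nondegenerate m k \<mu>})) / real (card T)"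
    using main by (intro divide_right_mono) auto
  also have "\<dots> = measure_pmf.prob (pmf_of_set T) {\<mu>. nondegenerate m k \<mu>}"
    using measure_pmf_of_set[OF Tne finT] by simp
  finally show ?thesis unfolding T_def .
qed

end
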